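(* For every integer $k\ge0$ there exists a map $f:U_{k+1}\to U_k$ with $\operatorname{dis}(f)=1$.
   Context: For metric spaces $X,Y$ and $a>0$, $X\overset{a}{\sqcup}Y$ is the disjoint union with the original metrics on each part and distance $a$ between points of different parts. The sequence $(U_k)_{k\ge0}$: $U_0$ is a one-point space, $U_1$ is a two-point space with distance $1$, and $U_k=U_{k-2}\overset{k}{\sqcup}U_{k-2}$ for $k>1$. For $f:X\to Y$, $\operatorname{dis}(f)=\sup_{x,x'\in X}|d_X(x,x')-d_Y(f(x),f(x'))|$. *)

theory Defs
  imports Complex_Main
begin

text \<open>The points of U_k are boolean lists: U_0 = {[]},
U_1 = {[False],[True]}, and U_(k+2) consists of two tagged copies b # x of U_k.\<close>

fun U_pts :: "nat \<Rightarrow> bool list set" where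
  "U_pts 0 = {[]}"
| "U_pts (Suc 0) = {[False], [True]}"
| "U_pts (Suc (Suc k)) = {b # x | b x. x \<in> U_pts k}"

fun U_dist :: "nat \<Rightarrow> bool list \<Rightarrow> bool list \<Rightarrow> real" where
  "U_dist 0 x y = 0"
| "U_dist (Suc 0) x y = (if x = y then 0 else 1)"
| "U_dist (Suc (Suc k)) (a # x) (b # y) =
     (if a = b then U_dist k x y else real (Suc (Suc k)))"
| "U_dist (Suc (Suc k)) _ _ = 0"

definition dis :: "'a set \<Rightarrow> ('a \<Rightarrow> 'a \<Rightarrow> real) \<Rightarrow> ('b \<Rightarrow> 'b \<Rightarrow> real) \<Rightarrow> ('a \<Rightarrow> 'b) \<Rightarrow> real" where
  "dis X dX dY f = (SUP p \<in> X \<times> X. \<bar>dX (fst p) (snd p) - dY (f (fst p)) (f (snd p))\<bar>)"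

end

theory Submission
  imports Defs
begin

lemma take_pts: "x \<in> U_pts (Suc k) \<Longrightarrow>
   take ((Suc k) div 2) x \<in> U_pts k \<and>
   (\<forall>y \<in> U_pts (Suc k). \<bar>U_dist (Suc k) x y - U_dist k (take ((Suc k) div 2) x) (take ((Suc k) div 2) y)\<bar>
      = (if x = y then 0 else 1))"
proof (induction k arbitrary: x rule: less_induct)
  case (less k)
  show ?case
  proof (cases k)
    case 0
    then show ?thesis using less.prems by auto
  next
    case (Suc j)
    show ?thesis
    proof (cases j)
      case 0
      then show ?thesis using less.prems Suc by auto
    next
      case (Suc i)
      have kk: "k = Suc (Suc i)" using \<open>k = Suc j\<close> Suc by simp
      obtain a x' where x: "x = a # x'" "x' \<in> U_pts (Suc i)" using less.prems kk by auto
      have dv: "Suc k div 2 = Suc (Suc i div 2)" using kk by simp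
      have IH: "take (Suc i div 2) x' \<in> U_pts i \<and>
   (\<forall>y \<in> U_pts (Suc i). \<bar>U_dist (Suc i) x' y - U_dist i (take (Suc i div 2) x') (take (Suc i div 2) y)\<bar>
      = (if x' = y then 0 else 1))" using less.IH[of i x'] kk x by simp
      show ?thesis
      proof (intro conjI ballI)
        show "take (Suc k div 2) x \<in> U_pts k" using IH x dv kk by auto
      next
        fix y assume "y \<in> U_pts (Suc k)"
        then obtain b y' where y: "y = b # y'" "y' \<in> U_pts (Suc i)" using kk by auto
        show "\<bar>U_dist (Suc k) x y - U_dist k (take (Suc k div 2) x) (take (Suc k div 2) y)\<bar>
           = (if x = y then 0 else 1)"
          using IH y x dv kk by auto
      qed
    qed
  qed
qed

lemma nonempty: "\<exists>x. x \<in> U_pts k"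
  by (induction k rule: U_pts.induct) auto

lemma two_pts: "\<exists>x y. x \<in> U_pts (Suc k) \<and> y \<in> U_pts (Suc k) \<and> x \<noteq> y"
proof (cases k)
  case 0
  have "[False] \<in> U_pts (Suc 0)" "[True] \<in> U_pts (Suc 0)" by simp_all
  then show ?thesis using 0 by blast
next
  case (Suc j)
  obtain x where x: "x \<in> U_pts j" using nonempty by blast
  have "True # x \<in> U_pts (Suc (Suc j))" "False # x \<in> U_pts (Suc (Suc j))" using x by auto
  then show ?thesis using Suc by blast
qed

theorem claim7:
  fixes k :: nat
  shows "\<exists>f. (\<forall>x \<in> U_pts (Suc k). f x \<in> U_pts k)
             \<and> dis (U_pts (Suc k)) (U_dist (Suc k)) (U_dist k) f = 1"
proof (intro exI conjI)
  let ?f = "take (Suc k div 2) :: bool list \<Rightarrow> bool list"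
  let ?X = "U_pts (Suc k) \<times> U_pts (Suc k)"
  show "\<forall>x \<in> U_pts (Suc k). ?f x \<in> U_pts k"
  proof
    fix x assume x: "x \<in> U_pts (Suc k)"
    show "?f x \<in> U_pts k" by (rule conjunct1[OF take_pts[OF x]])
  qed
  let ?g = "\<lambda>p. \<bar>U_dist (Suc k) (fst p) (snd p) - U_dist k (?f (fst p)) (?f (snd p))\<bar>"
  have gp: "?g p = (if fst p = snd p then 0 else 1)" if "p \<in> ?X" for p
  proof -
    obtain a b where p: "p = (a, b)" by (cases p)
    have a: "a \<in> U_pts (Suc k)" and b: "b \<in> U_pts (Suc k)" using that p by auto
    have "\<bar>U_dist (Suc k) a b - U_dist k (?f a) (?f b)\<bar> = (if a = b then 0 else 1)"
      by (rule bspec[OF conjunct2[OF take_pts[OF a]] b])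
    then show ?thesis using p by simp
  qed
  have sub: "?g ` ?X \<subseteq> {0, 1}"
  proof
    fix r assume "r \<in> ?g ` ?X"
    then obtain p where "p \<in> ?X" "r = ?g p" by blast
    then show "r \<in> {0, 1}" using gp[of p] by (simp split: if_splits)
  qed
  obtain x y where xy: "x \<in> U_pts (Suc k)" "y \<in> U_pts (Suc k)" "x \<noteq> y"
    using two_pts[of k] by (elim exE conjE)
  have xyX: "(x, y) \<in> ?X" using xy(1,2) by (rule SigmaI)
  have g1: "?g (x, y) = (if fst (x, y) = snd (x, y) then 0 else 1)" by (rule gp[OF xyX])
  have g2: "(if fst (x, y) = snd (x, y) then 0 else (1::real)) = 1" using xy(3) by simp
  have "?g (x, y) \<in> ?g ` ?X" by (rule imageI[OF xyX])
  then have one: "1 \<in> ?g ` ?X" unfolding g1 g2 .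
  have fin: "finite (?g ` ?X)" by (rule finite_subset[OF sub]) simp
  have "Sup (?g ` ?X) = 1"
  proof (rule antisym)
    show "Sup (?g ` ?X) \<le> 1"
    proof (rule cSup_least)
      show "?g ` ?X \<noteq> {}" using one by blast
    next
      fix r assume "r \<in> ?g ` ?X"
      then have "r \<in> {0, 1}" using sub by blast
      then show "r \<le> 1" by auto
    qed
    show "1 \<le> Sup (?g ` ?X)"
      by (rule cSup_upper[OF one bdd_above_finite[OF fin]])
  qed
  then show "dis (U_pts (Suc k)) (U_dist (Suc k)) (U_dist k) ?f = 1"
    unfolding dis_def by simp
qed

end
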